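(* Let $a\in\mathbb{C}$ with $|a|\le 1$ and let $m$ be a positive integer. Let $\omega_\pm(\cdot,m)$ be real-analytic functions of $\theta\in\mathbb{R}$ satisfying $$\cos(\omega_\pm(\theta,m))=\begin{cases}|a|^m\cos(m(\theta+\arg a)), & m\text{ odd},\\ -|a|^m\cos(m(\theta+\arg a))+(-1)^{m/2}(|a|^m-1), & m\text{ even}.\end{cases}$$ Then $$\max_{\theta}|\partial_\theta\omega_\pm(\theta,m)|=\begin{cases} m|a|^m, & m\text{ odd},\\ m|a|^{m/2}, & m\text{ even}.\end{cases}$$
   Context: The functions $\omega_\pm(\theta,m)$ are the dispersion relations (eigenphases of the Fourier symbol) of the $m$-th power of an electric shift-coin quantum walk with coin $\begin{bmatrix}a&b\\-\bar b&\bar a\end{bmatrix}$, $|a|^2+|b|^2=1$; analytic choices of these eigenphase functions exist. *)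

theory Defs
  imports "HOL-Analysis.Analysis"
begin

definition real_analytic :: "(real \<Rightarrow> real) \<Rightarrow> bool" where
  "real_analytic f \<longleftrightarrow>
     (\<forall>x0. \<exists>c :: nat \<Rightarrow> real. \<exists>r > 0.
        \<forall>x. \<bar>x - x0\<bar> < r \<longrightarrow> (\<lambda>n. c n * (x - x0) ^ n) sums f x)"

definition disp_cos :: "complex \<Rightarrow> nat \<Rightarrow> real \<Rightarrow> real" where
  "disp_cos a m \<theta> =
     (if odd m then cmod a ^ m * cos (real m * (\<theta> + Arg a))
      else - (cmod a ^ m * cos (real m * (\<theta> + Arg a)))
           + (-1) ^ (m div 2) * (cmod a ^ m - 1))"

end

theory Submission
  imports Defs
begin

lemma ra_deriv:
  assumes "real_analytic f"
  shows "\<exists>D. (f has_real_derivative D) (at x0)"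
proof -
  obtain c r where r: "r > 0" and S: "\<forall>x. \<bar>x - x0\<bar> < r \<longrightarrow> (\<lambda>n. c n * (x - x0) ^ n) sums f x"
    using assms unfolding real_analytic_def by blast
  have summ: "summable (\<lambda>n. c n * (r/2) ^ n)"
    using S[rule_format, of "x0 + r/2"] r by (auto simp: sums_iff)
  have d0: "DERIV (\<lambda>t. \<Sum>n. c n * t ^ n) (x0 - x0) :> (\<Sum>n. diffs c n * 0 ^ n)"
    using termdiffs_strong[OF summ, of 0] r by simp
  have "((\<lambda>t. \<Sum>n. c n * t ^ n) \<circ> (\<lambda>x. x - x0) has_real_derivative (\<Sum>n. diffs c n * 0 ^ n) * 1) (at x0)"
    apply (rule DERIV_chain[of _ _ "\<lambda>x. x - x0"])
    using d0 apply simp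
    by (auto intro!: derivative_eq_intros)
  then have d1: "((\<lambda>x. \<Sum>n. c n * (x - x0) ^ n) has_real_derivative (\<Sum>n. diffs c n * 0 ^ n)) (at x0)"
    by (simp add: o_def)
  have "(f has_real_derivative (\<Sum>n. diffs c n * 0 ^ n)) (at x0)"
  proof (rule has_field_derivative_transform_within_open[OF d1, of "ball x0 r"])
    show "open (ball x0 r)" by simp
    show "x0 \<in> ball x0 r" using r by simp
    fix x assume "x \<in> ball x0 r"
    then have "\<bar>x - x0\<bar> < r" by (simp add: dist_real_def abs_minus_commute)
    then show "(\<Sum>n. c n * (x - x0) ^ n) = f x" using S by (simp add: sums_iff)
  qed
  then show ?thesis by blast
qed

lemma nondeg:
  fixes \<omega> :: "real \<Rightarrow> real"
  assumes D: "(\<omega> has_real_derivative D) (at x)"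
    and g: "\<And>y. cos (\<omega> y) = A * cos (m * (y + p)) + B"
  shows "D\<^sup>2 * (1 - (A * cos (m * (x + p)) + B)\<^sup>2) = A\<^sup>2 * m\<^sup>2 * (sin (m * (x + p)))\<^sup>2"
proof -
  have d1: "((\<lambda>y. cos (\<omega> y)) has_real_derivative (- sin (\<omega> x) * D)) (at x)"
    using D by (auto intro!: derivative_eq_intros)
  have d2: "((\<lambda>y. cos (\<omega> y)) has_real_derivative (- A * sin (m * (x + p)) * m)) (at x)"
    unfolding g by (auto intro!: derivative_eq_intros)
  have e: "- sin (\<omega> x) * D = - A * sin (m * (x + p)) * m" using DERIV_unique[OF d1 d2] .
  have s: "(sin (\<omega> x))\<^sup>2 = 1 - (A * cos (m * (x + p)) + B)\<^sup>2"
    using sin_squared_eq[of "\<omega> x"] g[of x] by simp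
  have "(sin (\<omega> x) * D)\<^sup>2 = (A * sin (m * (x + p)) * m)\<^sup>2" using e
    by (metis minus_mult_left power2_minus)
  then have "D\<^sup>2 * (sin (\<omega> x))\<^sup>2 = A\<^sup>2 * m\<^sup>2 * (sin (m * (x + p)))\<^sup>2"
    by (simp add: power_mult_distrib algebra_simps)
  then show ?thesis using s by simp
qed

lemma deg:
  fixes \<omega> :: "real \<Rightarrow> real" and m :: real
  assumes D: "(\<omega> has_real_derivative D) (at x)"
    and g: "\<And>y. cos (\<omega> y) = A * cos (m * (y + p)) + B"
    and m: "m > 0"
    and e: "(A * cos (m * (x + p)) + B)\<^sup>2 = 1"
  shows "\<bar>D\<bar> = sqrt ((A * cos (m * (x + p)) + B) * A * cos (m * (x + p))) * m"
proof -
  define u0 where "u0 = cos (m * (x + p))"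
  define s0 where "s0 = sin (m * (x + p))"
  define e where "e = A * u0 + B"
  define K where "K = e * A * u0"
  have ee: "e * e = 1" using e unfolding e_def u0_def by (simp add: power2_eq_square)
  have le: "e * (A * cos (m * (y + p)) + B) \<le> 1" for y
  proof -
    have "\<bar>e\<bar> = 1" using ee by (metis abs_square_eq_1 power2_eq_square)
    moreover have "\<bar>cos (\<omega> y)\<bar> \<le> 1" by simp
    ultimately have "\<bar>e * cos (\<omega> y)\<bar> \<le> 1" by (simp add: abs_mult)
    then show ?thesis using g[of y] by simp
  qed
  have dd: "((\<lambda>y. e * (A * cos (m * (y + p)) + B)) has_real_derivative e * (- A * sin (m * (x + p)) * m)) (at x)"
    by (auto intro!: derivative_eq_intros)
  have "e * (- A * sin (m * (x + p)) * m) = 0"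
    apply (rule DERIV_local_max[OF dd, of 1])
    using le ee unfolding e_def u0_def by auto
  then have As: "A * s0 = 0" using m ee unfolding s0_def by auto
  have key: "1 - e * cos (\<omega> (x + h)) = K * (1 - cos (m * h))" for h
  proof -
    have "cos (\<omega> (x + h)) = A * cos (m * (x + p) + m * h) + B" using g[of "x+h"] by (simp add: algebra_simps)
    also have "\<dots> = A * (u0 * cos (m * h) - s0 * sin (m * h)) + B"
      unfolding u0_def s0_def by (simp add: cos_add)
    also have "\<dots> = A * u0 * cos (m * h) - (A * s0) * sin (m * h) + B" by (simp add: algebra_simps)
    also have "\<dots> = A * u0 * cos (m * h) + B" unfolding As by simp
    finally have c: "cos (\<omega> (x + h)) = A * u0 * cos (m * h) + B" .
    have "1 = e * A * u0 + e * B" using ee unfolding e_def by (simp add: algebra_simps)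
    then show ?thesis unfolding c K_def by (simp add: algebra_simps)
  qed
  have cx: "cos (\<omega> x) = e" using g[of x] unfolding e_def u0_def by simp
  have sx: "sin (\<omega> x) = 0" using sin_squared_eq[of "\<omega> x"] cx ee by (simp add: power2_eq_square)
  have cds: "cos t = 1 - 2 * (sin (t / 2))\<^sup>2" for t :: real
    using cos_double_sin[of "t/2"] by simp
  have sq: "(sin ((\<omega> (x + h) - \<omega> x) / 2))\<^sup>2 = K * (sin (m * h / 2))\<^sup>2" for h
  proof -
    have "cos (\<omega> (x + h) - \<omega> x) = e * cos (\<omega> (x + h))" using cx sx by (simp add: cos_diff)
    then have "1 - cos (\<omega> (x + h) - \<omega> x) = K * (1 - cos (m * h))" using key by simp
    moreover have "cos (\<omega> (x + h) - \<omega> x) = 1 - 2 * (sin ((\<omega> (x + h) - \<omega> x) / 2))\<^sup>2"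
      by (rule cds)
    moreover have "cos (m * h) = 1 - 2 * (sin (m * h / 2))\<^sup>2"
      by (rule cds)
    ultimately show ?thesis by simp
  qed
  have K0: "K \<ge> 0"
  proof -
    have "sin (m * (pi / m) / 2) = 1" using m by simp
    then have "(sin ((\<omega> (x + pi/m) - \<omega> x) / 2))\<^sup>2 = K" using sq[of "pi/m"] by simp
    then show ?thesis by (metis zero_le_power2)
  qed
  have absq: "\<bar>sin ((\<omega> (x + h) - \<omega> x) / 2) / h\<bar> = sqrt K * \<bar>sin (m * (x + h - x) / 2) / h\<bar>" for h
  proof -
    have "\<bar>sin ((\<omega> (x + h) - \<omega> x) / 2)\<bar> = sqrt ((sin ((\<omega> (x + h) - \<omega> x) / 2))\<^sup>2)" by simp
    also have "\<dots> = sqrt K * \<bar>sin (m * h / 2)\<bar>" unfolding sq by (simp add: real_sqrt_mult)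
    finally show ?thesis by (simp add: abs_divide)
  qed
  have d1: "((\<lambda>y. sin ((\<omega> y - \<omega> x) / 2)) has_real_derivative cos ((\<omega> x - \<omega> x) / 2) * (D / 2)) (at x)"
    using D by (auto intro!: derivative_eq_intros)
  have d2: "((\<lambda>y. sin (m * (y - x) / 2)) has_real_derivative cos (m * (x - x) / 2) * (m / 2)) (at x)"
    by (auto intro!: derivative_eq_intros)
  have l1: "((\<lambda>h. sin ((\<omega> (x + h) - \<omega> x) / 2) / h) \<longlongrightarrow> D / 2) (at 0)"
    using d1 unfolding DERIV_def by simp
  have l2: "((\<lambda>h. sin (m * (x + h - x) / 2) / h) \<longlongrightarrow> m / 2) (at 0)"
    using d2 unfolding DERIV_def by simp
  have "((\<lambda>h. \<bar>sin ((\<omega> (x + h) - \<omega> x) / 2) / h\<bar>) \<longlongrightarrow> \<bar>D / 2\<bar>) (at 0)"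
    using tendsto_rabs[OF l1] .
  moreover have "((\<lambda>h. \<bar>sin ((\<omega> (x + h) - \<omega> x) / 2) / h\<bar>) \<longlongrightarrow> sqrt K * \<bar>m / 2\<bar>) (at 0)"
    unfolding absq by (intro tendsto_intros l2)
  ultimately have "\<bar>D / 2\<bar> = sqrt K * \<bar>m / 2\<bar>" by (rule tendsto_unique[rotated]) simp
  then show ?thesis using m unfolding K_def e_def u0_def by simp
qed


lemma bound_gen:
  fixes \<omega> :: "real \<Rightarrow> real" and m M A B p :: real
  assumes D: "(\<omega> has_real_derivative D) (at x)"
    and g: "\<And>y. cos (\<omega> y) = A * cos (m * (y + p)) + B"
    and m: "m > 0" and M: "M \<ge> 0"
    and nd: "\<And>u. \<bar>u\<bar> \<le> 1 \<Longrightarrow> \<bar>A*u+B\<bar> \<le> 1 \<Longrightarrow> A\<^sup>2*m\<^sup>2*(1-u\<^sup>2) \<le> M\<^sup>2*(1-(A*u+B)\<^sup>2)"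
    and dg: "\<And>u. \<bar>u\<bar> \<le> 1 \<Longrightarrow> (A*u+B)\<^sup>2 = 1 \<Longrightarrow> sqrt((A*u+B)*A*u) * m \<le> M"
  shows "\<bar>D\<bar> \<le> M"
proof -
  define u where "u = cos (m * (x + p))"
  have u1: "\<bar>u\<bar> \<le> 1" unfolding u_def by simp
  have g1: "\<bar>A*u+B\<bar> \<le> 1" using g[of x] unfolding u_def by (metis abs_cos_le_one)
  show ?thesis
  proof (cases "(A*u+B)\<^sup>2 = 1")
    case True
    then show ?thesis using deg[OF D g m] dg[OF u1 True] unfolding u_def by simp
  next
    case False
    have pos: "1 - (A*u+B)\<^sup>2 > 0" using g1 False
      by (metis abs_square_le_1 diff_gt_0_iff_gt order_le_less)
    have "D\<^sup>2 * (1 - (A*u+B)\<^sup>2) = A\<^sup>2 * m\<^sup>2 * (1 - u\<^sup>2)"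
      using nondeg[OF D g] unfolding u_def by (simp add: sin_squared_eq)
    also have "\<dots> \<le> M\<^sup>2 * (1 - (A*u+B)\<^sup>2)" by (rule nd[OF u1 g1])
    finally have "D\<^sup>2 \<le> M\<^sup>2" using pos by simp
    then show ?thesis using M by (metis abs_le_square_iff abs_of_nonneg)
  qed
qed

theorem lemma3p1:
  fixes a :: complex and m :: nat and \<omega> :: "real \<Rightarrow> real"
  assumes "cmod a \<le> 1" and "m \<ge> 1"
    and "real_analytic \<omega>"
    and "\<And>\<theta>. cos (\<omega> \<theta>) = disp_cos a m \<theta>"
  shows "(\<forall>\<theta>. \<bar>deriv \<omega> \<theta>\<bar> \<le> (if odd m then real m * cmod a ^ m else real m * cmod a ^ (m div 2)))
       \<and> (\<exists>\<theta>. \<bar>deriv \<omega> \<theta>\<bar> = (if odd m then real m * cmod a ^ m else real m * cmod a ^ (m div 2)))"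
proof -
  define r where "r = cmod a"
  define c where "c = r ^ m"
  define p where "p = Arg a"
  define M where "M = (if odd m then real m * cmod a ^ m else real m * cmod a ^ (m div 2))"
  have r0: "r \<ge> 0" and r1: "r \<le> 1" using assms(1) unfolding r_def by auto
  have c0: "c \<ge> 0" and c1: "c \<le> 1" unfolding c_def using r0 r1 by (auto simp: power_le_one)
  have mpos: "real m > 0" using assms(2) by simp
  have M0: "M \<ge> 0" unfolding M_def by simp
  have DD: "\<And>x. (\<omega> has_real_derivative deriv \<omega> x) (at x)"
    using ra_deriv[OF assms(3)] DERIV_imp_deriv by metis
  show ?thesis
  proof (cases "odd m")
    case True
    have g: "\<And>y. cos (\<omega> y) = c * cos (real m * (y + p)) + 0"
      using assms(4) True unfolding disp_cos_def c_def r_def p_def by simp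
    have MM: "M = real m * c" using True unfolding M_def c_def r_def by simp
    have bnd: "\<bar>deriv \<omega> x\<bar> \<le> M" for x
    proof (rule bound_gen[OF DD g mpos M0])
      fix u :: real assume u: "\<bar>u\<bar> \<le> 1" "\<bar>c*u+0\<bar> \<le> 1"
      have "c\<^sup>2 * u\<^sup>2 \<le> u\<^sup>2" using c0 c1 by (simp add: mult_left_le_one_le power_le_one)
      then have "(c\<^sup>2 * (c\<^sup>2 * u\<^sup>2)) * (real m)\<^sup>2 \<le> (c\<^sup>2 * u\<^sup>2) * (real m)\<^sup>2"
        by (intro mult_right_mono mult_left_mono) auto
      then show "c\<^sup>2 * (real m)\<^sup>2 * (1 - u\<^sup>2) \<le> M\<^sup>2 * (1 - (c * u + 0)\<^sup>2)"
        unfolding MM by (simp add: power_mult_distrib algebra_simps)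
    next
      fix u :: real assume u: "\<bar>u\<bar> \<le> 1" "(c*u+0)\<^sup>2 = 1"
      then have "c\<^sup>2 * u\<^sup>2 = 1" by (simp add: power_mult_distrib)
      moreover have "u\<^sup>2 \<le> 1" using u(1) by (simp add: abs_square_le_1)
      moreover have "c\<^sup>2 \<le> 1" using c0 c1 by (simp add: power_le_one)
      moreover have "c\<^sup>2 * u\<^sup>2 \<le> c\<^sup>2 * 1" using \<open>u\<^sup>2 \<le> 1\<close> by (intro mult_left_mono) auto
      ultimately have "c\<^sup>2 = 1" by linarith
      then have "c = 1" using c0 by (simp add: power2_eq_1_iff)
      then show "sqrt ((c * u + 0) * c * u) * real m \<le> M" using u unfolding MM by (simp add: power2_eq_square)
    qed
    define t where "t = pi / (2 * real m) - p"
    have mt: "real m * (t + p) = pi / 2" unfolding t_def using mpos by (simp add: field_simps)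
    have "(deriv \<omega> t)\<^sup>2 * (1 - (c * cos (real m * (t + p)) + 0)\<^sup>2) = c\<^sup>2 * (real m)\<^sup>2 * (sin (real m * (t + p)))\<^sup>2"
      by (rule nondeg[OF DD g])
    then have "(deriv \<omega> t)\<^sup>2 = M\<^sup>2" unfolding mt MM by (simp add: power_mult_distrib)
    then have "\<bar>deriv \<omega> t\<bar> = M" using M0 by (metis abs_of_nonneg power2_eq_iff abs_minus_cancel abs_abs)
    then show ?thesis using bnd unfolding M_def by blast
  next
    case False
    define s :: real where "s = (-1) ^ (m div 2)"
    have g: "\<And>y. cos (\<omega> y) = (-c) * cos (real m * (y + p)) + s * (c - 1)"
      using assms(4) False unfolding disp_cos_def c_def r_def p_def s_def by simp
    have sq: "sqrt c = r ^ (m div 2)"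
    proof -
      have "c = (r ^ (m div 2))\<^sup>2" unfolding c_def using False
        by (metis dvd_mult_div_cancel even_iff_mod_2_eq_zero mult.commute power_mult odd_iff_mod_2_eq_one)
      then show ?thesis using r0 by simp
    qed
    have MM: "M = real m * sqrt c" using False unfolding M_def sq r_def by simp
    have MM2: "M\<^sup>2 = (real m)\<^sup>2 * c" unfolding MM using c0 by (simp add: power_mult_distrib)
    have s1: "s = 1 \<or> s = -1" unfolding s_def by (cases "even (m div 2)") auto
    have bnd: "\<bar>deriv \<omega> x\<bar> \<le> M" for x
    proof (rule bound_gen[OF DD g mpos M0])
      fix u :: real assume u: "\<bar>u\<bar> \<le> 1" "\<bar>(-c)*u+s*(c-1)\<bar> \<le> 1"
      have that: "c * (1 - u\<^sup>2) * c \<le> (1 - ((-c)*u+s*(c-1))\<^sup>2) * c"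
      proof -
        have "1 - ((-c)*u+s*(c-1))\<^sup>2 - c * (1 - u\<^sup>2) = c * (1 - c) * (1 - s * u)\<^sup>2"
          using s1 by (auto simp: power2_eq_square algebra_simps)
        also have "\<dots> \<ge> 0" using c0 c1 by simp
        finally show ?thesis using c0 by (simp add: mult_right_mono)
      qed
      show "(-c)\<^sup>2 * (real m)\<^sup>2 * (1 - u\<^sup>2) \<le> M\<^sup>2 * (1 - ((-c) * u + s * (c - 1))\<^sup>2)"
      proof -
        have "(c * (1 - u\<^sup>2) * c) * (real m)\<^sup>2 \<le> ((1 - ((-c)*u+s*(c-1))\<^sup>2) * c) * (real m)\<^sup>2"
          by (rule mult_right_mono[OF that]) simp
        moreover have "(-c)\<^sup>2 * (real m)\<^sup>2 * (1 - u\<^sup>2) = (c * (1 - u\<^sup>2) * c) * (real m)\<^sup>2"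
          by (simp add: power2_eq_square)
        moreover have "M\<^sup>2 * (1 - ((-c) * u + s * (c - 1))\<^sup>2) = ((1 - ((-c)*u+s*(c-1))\<^sup>2) * c) * (real m)\<^sup>2"
          unfolding MM2 by simp
        ultimately show ?thesis by linarith
      qed
    next
      fix u :: real assume u: "\<bar>u\<bar> \<le> 1" "((-c)*u+s*(c-1))\<^sup>2 = 1"
      have "\<bar>(-c)*u+s*(c-1)\<bar> = 1" using u(2) by (simp add: abs_square_eq_1)
      then have "((-c)*u+s*(c-1))*((-c)*u) \<le> c"
      proof -
        assume h: "\<bar>(-c)*u+s*(c-1)\<bar> = 1"
        have "((-c)*u+s*(c-1))*((-c)*u) \<le> \<bar>((-c)*u+s*(c-1))*((-c)*u)\<bar>" by (rule abs_ge_self)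
        also have "\<dots> = c * \<bar>u\<bar>" using h c0 by (simp add: abs_mult)
        also have "\<dots> \<le> c" using u(1) c0 by (simp add: mult_left_le)
        finally show ?thesis .
      qed
      then have "((-c)*u+s*(c-1))*(-c)*u \<le> c" by (simp add: mult.assoc)
      then show "sqrt (((-c)*u+s*(c-1))*(-c)*u) * real m \<le> M"
        unfolding MM using mpos by (simp add: mult_right_mono)
    qed
    define t where "t = (if s = 1 then 0 else pi / real m) - p"
    have ct: "cos (real m * (t + p)) = s" using s1 mpos unfolding t_def by auto
    have "\<bar>deriv \<omega> t\<bar> = sqrt (((-c) * cos (real m * (t + p)) + s * (c - 1)) * (-c) * cos (real m * (t + p))) * real m"
      by (rule deg[OF DD g mpos]) (unfold ct, use s1 in \<open>auto simp: power2_eq_square algebra_simps\<close>)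
    also have "\<dots> = M" unfolding ct MM using s1 by (auto simp: algebra_simps)
    finally show ?thesis using bnd unfolding M_def by blast
  qed
qed

end
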